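(* Let $A\in\mathbb{R}^{m\times n}$ with $m\ge n$ and with nonzero rows $a_1^\top,\dots,a_m^\top$, let $x\in\mathbb{R}^n$ and $b:=Ax$. Fix $\beta\in[0,1)$, $M\in[0,1]$ and $l\in\{1,\dots,n\}$; let $\sigma_l$ be the $l$-th largest singular value of $A$ and $v_l$ an associated right singular vector. Given $x_0\in\mathbb{R}^n$ and $y_0=0$, define for $k\ge0$ $$x_{k+1}=x_k+\frac{b_{i_k}-\langle x_k,a_{i_k}\rangle}{\|a_{i_k}\|_2^2}a_{i_k}+My_k,\qquad y_{k+1}=\beta y_k+(1-\beta)(x_{k+1}-x_k),$$ with $i_0,i_1,\dots$ independent and $\mathbb{P}(i_k=i)=\|a_i\|_2^2/\|A\|_F^2$. Let $r:=1-\sigma_l^2/\|A\|_F^2+M(1-\beta)$, $\zeta:=M(1-\beta)^2$, and $$\lambda_1:=\frac{r+\beta+\sqrt{(r-\beta)^2-4\zeta}}{2}.$$ Suppose $\lambda_1$ is complex with nonzero imaginary part, i.e. $\lambda_1=\rho e^{i\theta}$ with $\rho>0$ and $0<\theta<\pi$. Then there exist constants $C$ and $\theta_0$, depending on $r,\zeta,\beta,v_l,x,x_0$, such that for all $k\ge0$, $$\mathbb{E}\langle x_{k+1}-x,v_l\rangle=C\rho^k\cos(k\theta+\theta_0).$$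
   Context: $\|\cdot\|_2$ is the Euclidean norm, $\|A\|_F$ the Frobenius norm, $b_i$ the $i$-th entry of $b$; expectation is over the random indices. When $(r-\beta)^2-4\zeta<0$ the square root is $i\sqrt{4\zeta-(r-\beta)^2}$. *)

theory Defs
  imports "HOL-Analysis.Analysis"
begin

text \<open>The l-th largest singular value is then sv (l-1).\<close>
definition singular_value_list :: "real^'n^'m \<Rightarrow> (nat \<Rightarrow> real) \<Rightarrow> bool" where
  "singular_value_list A sv \<longleftrightarrow>
     (\<forall>i j. i \<le> j \<longrightarrow> j < CARD('n) \<longrightarrow> sv j \<le> sv i) \<and>
     (\<forall>j < CARD('n). 0 \<le> sv j) \<and>
     (\<exists>w :: nat \<Rightarrow> real^'n.
        (\<forall>i < CARD('n). \<forall>j < CARD('n). w i \<bullet> w j = (if i = j then 1 else 0)) \<and>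
        (\<forall>j < CARD('n). (transpose A ** A) *v w j = (sv j)\<^sup>2 *\<^sub>R w j))"

text \<open>Randomized Kaczmarz with momentum, driven by an index sequence s (s k = i_k).
  Returns (x_k, y_k); x_k, y_k only depend on s 0, ..., s (k-1).\<close>
fun rk_mom :: "real^'n^'m \<Rightarrow> real^'m \<Rightarrow> real \<Rightarrow> real \<Rightarrow> real^'n \<Rightarrow> (nat \<Rightarrow> 'm)
                \<Rightarrow> nat \<Rightarrow> (real^'n) \<times> (real^'n)" where
  "rk_mom A b M \<beta> x0 s 0 = (x0, 0)"
| "rk_mom A b M \<beta> x0 s (Suc k) =
     (let xk = fst (rk_mom A b M \<beta> x0 s k); yk = snd (rk_mom A b M \<beta> x0 s k);
          a = A $ (s k);
          x' = xk + ((b $ (s k) - xk \<bullet> a) / (norm a)\<^sup>2) *\<^sub>R a + M *\<^sub>R yk;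
          y' = \<beta> *\<^sub>R yk + (1 - \<beta>) *\<^sub>R (x' - xk)
      in (x', y'))"

definition frob_sq :: "real^'n^'m \<Rightarrow> real" where
  "frob_sq A = (\<Sum>i\<in>UNIV. (norm (A $ i))\<^sup>2)"

text \<open>Expectation of a function f of the first k indices s 0, ..., s (k-1), where these are
  i.i.d. with P(i = j) = |a_j|^2 / |A|_F^2.\<close>
definition rk_expect :: "real^'n^'m \<Rightarrow> nat \<Rightarrow> ((nat \<Rightarrow> 'm) \<Rightarrow> real) \<Rightarrow> real" where
  "rk_expect A k f =
     (\<Sum>s \<in> PiE {..<k} (\<lambda>_. UNIV). (\<Prod>j<k. (norm (A $ (s j)))\<^sup>2 / frob_sq A) * f s)"

end

theory Submission
  imports Defs
begin

lemma rk_mom_dep: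
  "(\<forall>j<k. s j = s' j) \<Longrightarrow> rk_mom A b M \<beta> x0 s k = rk_mom A b M \<beta> x0 s' k"
  by (induction k) (auto simp: Let_def)

lemma sum_PiE_Suc:
  fixes F :: "(nat \<Rightarrow> 'a::finite) \<Rightarrow> real"
  shows "(\<Sum>s\<in>PiE {..<Suc k} (\<lambda>_. UNIV). F s)
       = (\<Sum>s\<in>PiE {..<k} (\<lambda>_. UNIV). \<Sum>i\<in>UNIV. F (s(k:=i)))"
proof -
  have e: "{..<Suc k} = insert k {..<k}" by auto
  have P: "PiE {..<Suc k} (\<lambda>_. UNIV::'a set) = (\<lambda>(y,g). g(k:=y)) ` (UNIV \<times> PiE {..<k} (\<lambda>_. UNIV))"
    unfolding e by (simp add: PiE_insert_eq)
  have inj: "inj_on (\<lambda>(y,g). g(k:=y)) ((UNIV::'a set) \<times> PiE {..<k} (\<lambda>_. UNIV))"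
    using inj_combinator[of k "{..<k}" "\<lambda>_. UNIV::'a set"] by simp
  have "(\<Sum>s\<in>PiE {..<Suc k} (\<lambda>_. UNIV). F s) = (\<Sum>p\<in>(UNIV::'a set) \<times> PiE {..<k} (\<lambda>_. UNIV). F ((snd p)(k := fst p)))"
    unfolding P by (subst sum.reindex[OF inj]) (simp add: case_prod_beta)
  also have "\<dots> = (\<Sum>i\<in>UNIV. \<Sum>s\<in>PiE {..<k} (\<lambda>_. UNIV). F (s(k:=i)))"
    by (simp add: sum.cartesian_product case_prod_beta)
  also have "\<dots> = (\<Sum>s\<in>PiE {..<k} (\<lambda>_. UNIV). \<Sum>i\<in>UNIV. F (s(k:=i)))"
    by (rule sum.swap)
  finally show ?thesis .
qed

lemma rk_expect_step:
  fixes A :: "real^'n^'m"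
  assumes "\<And>i s s'. (\<forall>j<k. s j = s' j) \<Longrightarrow> G i s = G i s'"
  shows "rk_expect A (Suc k) (\<lambda>s. G (s k) s)
       = rk_expect A k (\<lambda>s. \<Sum>i\<in>UNIV. (norm (A$i))\<^sup>2 / frob_sq A * G i s)"
proof -
  have eq: "\<And>s i. (\<Prod>j<Suc k. (norm (A $ ((s(k:=i)) j)))\<^sup>2 / frob_sq A) * G ((s(k:=i)) k) (s(k:=i))
     = (\<Prod>j<k. (norm (A $ (s j)))\<^sup>2 / frob_sq A) * ((norm (A$i))\<^sup>2 / frob_sq A * G i s)"
  proof -
    fix s i
    have "G i (s(k:=i)) = G i s" by (rule assms) simp
    moreover have "(\<Prod>j<k. (norm (A $ ((s(k:=i)) j)))\<^sup>2 / frob_sq A) = (\<Prod>j<k. (norm (A $ (s j)))\<^sup>2 / frob_sq A)"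
      by (rule prod.cong) auto
    ultimately show "?thesis s i" by (simp add: prod.lessThan_Suc)
  qed
  then show ?thesis
    unfolding rk_expect_def sum_PiE_Suc by (intro sum.cong refl) (simp only: eq sum_distrib_left)
qed

lemma matvec_nth: "(A *v x) $ i = A $ i \<bullet> x"
  by (simp add: matrix_vector_mult_def inner_vec_def mult.commute)

lemma sum_rows:
  fixes A :: "real^'n^'m"
  shows "(\<Sum>i\<in>UNIV. (z \<bullet> A$i) * (A$i \<bullet> v)) = z \<bullet> ((transpose A ** A) *v v)"
proof -
  have "(transpose A ** A) *v v = transpose A *v (A *v v)" by (simp add: matrix_vector_mul_assoc)
  then show ?thesis
    by (simp add: matvec_nth inner_vec_def transpose_def matrix_vector_mult_def sum_distrib_left sum_distrib_right
        mult_ac) (rule sum.swap)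
qed

lemma rk_expect_lin:
  "rk_expect A k (\<lambda>s. a * f s + c * g s) = a * rk_expect A k f + c * rk_expect A k g"
  by (simp add: rk_expect_def sum.distrib sum_distrib_left algebra_simps)

lemma rk_expect_diff:
  "rk_expect A k (\<lambda>s. f s - g s) = rk_expect A k f - rk_expect A k g"
  by (simp add: rk_expect_def sum_subtractf algebra_simps)

theorem corollary1p5:
  fixes A :: "real^'n^'m" and x x0 v :: "real^'n" and \<beta> M :: real
    and l :: nat and sv :: "nat \<Rightarrow> real" and \<rho> \<theta> :: real
  assumes "CARD('n) \<le> CARD('m)"
    and "\<forall>i. A $ i \<noteq> 0"
    and "0 \<le> \<beta>" and "\<beta> < 1" and "0 \<le> M" and "M \<le> 1"
    and "1 \<le> l" and "l \<le> CARD('n)"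
    and "singular_value_list A sv"
    and "norm v = 1" and "(transpose A ** A) *v v = (sv (l - 1))\<^sup>2 *\<^sub>R v"
    and "Im ((complex_of_real (1 - (sv (l - 1))\<^sup>2 / frob_sq A + M * (1 - \<beta>)) + complex_of_real \<beta>
              + csqrt (complex_of_real ((1 - (sv (l - 1))\<^sup>2 / frob_sq A + M * (1 - \<beta>) - \<beta>)\<^sup>2
                                        - 4 * (M * (1 - \<beta>)\<^sup>2)))) / 2) \<noteq> 0"
    and "(complex_of_real (1 - (sv (l - 1))\<^sup>2 / frob_sq A + M * (1 - \<beta>)) + complex_of_real \<beta>
              + csqrt (complex_of_real ((1 - (sv (l - 1))\<^sup>2 / frob_sq A + M * (1 - \<beta>) - \<beta>)\<^sup>2
                                        - 4 * (M * (1 - \<beta>)\<^sup>2)))) / 2 = rcis \<rho> \<theta>"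
    and "0 < \<rho>" and "0 < \<theta>" and "\<theta> < pi"
  shows "\<exists>C \<theta>0. \<forall>k::nat.
           rk_expect A (Suc k) (\<lambda>s. (fst (rk_mom A (A *v x) M \<beta> x0 s (Suc k)) - x) \<bullet> v)
             = C * \<rho> ^ k * cos (real k * \<theta> + \<theta>0)"
proof -
  define F where "F = frob_sq A"
  define \<sigma>2 where "\<sigma>2 = (sv (l - 1))\<^sup>2"
  define q where "q = 1 - \<sigma>2 / F"
  define r where "r = q + M * (1 - \<beta>)"
  define T where "T = r + \<beta>"
  define D where "D = q * \<beta> + M * (1 - \<beta>)"
  define X where "X s k = fst (rk_mom A (A *v x) M \<beta> x0 s k)" for s k
  define Y where "Y s k = snd (rk_mom A (A *v x) M \<beta> x0 s k)" for s k
  define e where "e k = rk_expect A k (\<lambda>s. (X s k - x) \<bullet> v)" for k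
  define f where "f k = rk_expect A k (\<lambda>s. Y s k \<bullet> v)" for k
  define w where "w i = (norm (A$i))\<^sup>2 / F" for i
  have nz: "\<And>i. norm (A$i) \<noteq> 0" using assms(2) by simp
  have Fpos: "F > 0"
  proof -
    have "0 < (norm (A $ (undefined::'m)))\<^sup>2" using nz by simp
    also have "\<dots> \<le> F" unfolding F_def frob_sq_def
      by (rule member_le_sum) auto
    finally show ?thesis .
  qed
  have wsum: "(\<Sum>i\<in>UNIV. w i) = 1"
    using Fpos by (simp add: w_def F_def frob_sq_def sum_divide_distrib[symmetric])
  have depX: "\<And>k s s'. (\<forall>j<k. s j = s' j) \<Longrightarrow> X s k = X s' k"
    unfolding X_def using rk_mom_dep by metis
  have depY: "\<And>k s s'. (\<forall>j<k. s j = s' j) \<Longrightarrow> Y s k = Y s' k"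
    unfolding Y_def using rk_mom_dep by metis
  have stepc: "rk_expect A (Suc k) g = rk_expect A k g"
    if "\<And>s s'. (\<forall>j<k. s j = s' j) \<Longrightarrow> g s = g s'" for k g
  proof -
    have "rk_expect A (Suc k) (\<lambda>s. (\<lambda>i s. g s) (s k) s)
       = rk_expect A k (\<lambda>s. \<Sum>i\<in>UNIV. (norm (A$i))\<^sup>2 / frob_sq A * g s)"
      by (rule rk_expect_step) (rule that)
    also have "(\<lambda>s. \<Sum>i\<in>UNIV. (norm (A$i))\<^sup>2 / frob_sq A * g s) = g"
      using wsum unfolding w_def F_def by (intro ext, simp only: sum_distrib_right[symmetric])
    finally show ?thesis by simp
  qed
  have Xsuc: "X s (Suc k) = X s k + (((A *v x) $ (s k) - X s k \<bullet> A $ (s k)) / (norm (A $ (s k)))\<^sup>2) *\<^sub>R A $ (s k) + M *\<^sub>R Y s k"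
    for s k by (simp add: X_def Y_def Let_def)
  have Ysuc: "Y s (Suc k) = \<beta> *\<^sub>R Y s k + (1 - \<beta>) *\<^sub>R (X s (Suc k) - X s k)"
    for s k by (simp add: X_def Y_def Let_def)
  define G where "G k i s = (X s k - x) \<bullet> v - ((X s k - x) \<bullet> A$i) * (A$i \<bullet> v) / (norm (A$i))\<^sup>2 + M * (Y s k \<bullet> v)" for k i s
  have XG: "(X s (Suc k) - x) \<bullet> v = G k (s k) s" for s k
  proof -
    have "(A *v x) $ (s k) - X s k \<bullet> A $ (s k) = - ((X s k - x) \<bullet> A $ (s k))"
      by (simp add: matvec_nth inner_diff_left inner_diff_right inner_commute)
    then show ?thesis unfolding Xsuc G_def
      by (simp add: inner_add_left inner_diff_left algebra_simps add_divide_distrib[symmetric])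
  qed
  have Gsum: "(\<Sum>i\<in>UNIV. w i * G k i s) = q * ((X s k - x) \<bullet> v) + M * (Y s k \<bullet> v)" for k s
  proof -
    let ?z = "X s k - x"
    have "(\<Sum>i\<in>UNIV. w i * G k i s) = (\<Sum>i\<in>UNIV. w i) * (?z \<bullet> v) - (\<Sum>i\<in>UNIV. (?z \<bullet> A$i) * (A$i \<bullet> v)) / F
          + (\<Sum>i\<in>UNIV. w i) * (M * (Y s k \<bullet> v))"
    proof -
      have pt: "w i * G k i s = w i * (?z \<bullet> v) - ((?z \<bullet> A$i) * (A$i \<bullet> v)) / F + w i * (M * (Y s k \<bullet> v))" for i
        using nz[of i] Fpos unfolding G_def w_def by (simp add: field_simps)
      show ?thesis unfolding pt
        by (simp add: sum.distrib sum_subtractf sum_distrib_right sum_divide_distrib)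
    qed
    also have "(\<Sum>i\<in>UNIV. (?z \<bullet> A$i) * (A$i \<bullet> v)) = \<sigma>2 * (?z \<bullet> v)"
      by (simp add: sum_rows assms(11) \<sigma>2_def)
    finally have "(\<Sum>i\<in>UNIV. w i * G k i s) = (\<Sum>i\<in>UNIV. w i) * (?z \<bullet> v) - \<sigma>2 * (?z \<bullet> v) / F
          + (\<Sum>i\<in>UNIV. w i) * (M * (Y s k \<bullet> v))" .
    then show ?thesis unfolding wsum q_def by (simp add: algebra_simps diff_divide_distrib)
  qed
  have e_rec: "e (Suc k) = q * e k + M * f k" for k
  proof -
    have "e (Suc k) = rk_expect A (Suc k) (\<lambda>s. G k (s k) s)"
      unfolding e_def XG ..
    also have "\<dots> = rk_expect A k (\<lambda>s. \<Sum>i\<in>UNIV. w i * G k i s)"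
      unfolding w_def F_def
    proof (rule rk_expect_step)
      fix i s s' assume h: "\<forall>j<k. (s::nat\<Rightarrow>'m) j = s' j"
      show "G k i s = G k i s'" unfolding G_def using depX[OF h] depY[OF h] by simp
    qed
    also have "\<dots> = q * e k + M * f k"
      unfolding Gsum e_def f_def by (rule rk_expect_lin)
    finally show ?thesis .
  qed
  have f_rec: "f (Suc k) = \<beta> * f k + (1 - \<beta>) * (e (Suc k) - e k)" for k
  proof -
    have "f (Suc k) = rk_expect A (Suc k) (\<lambda>s. \<beta> * (Y s k \<bullet> v) + (1 - \<beta>) * ((X s (Suc k) - x) \<bullet> v - (X s k - x) \<bullet> v))"
      unfolding f_def Ysuc by (simp add: inner_add_left inner_diff_left)
    also have "\<dots> = \<beta> * rk_expect A (Suc k) (\<lambda>s. Y s k \<bullet> v) + (1 - \<beta>) * rk_expect A (Suc k) (\<lambda>s. (X s (Suc k) - x) \<bullet> v - (X s k - x) \<bullet> v)"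
      by (rule rk_expect_lin)
    also have "\<dots> = \<beta> * f k + (1 - \<beta>) * (e (Suc k) - e k)"
      unfolding rk_expect_diff f_def e_def
      by (subst (1 2) stepc) (auto dest: depX depY)
    finally show ?thesis .
  qed
  have rec2: "e (Suc (Suc k)) = T * e (Suc k) - D * e k" for k
  proof -
    have "M * f k = e (Suc k) - q * e k" using e_rec[of k] by simp
    have "e (Suc (Suc k)) = q * e (Suc k) + \<beta> * (M * f k) + (1 - \<beta>) * M * (e (Suc k) - e k)"
      using e_rec[of "Suc k"] f_rec[of k] by (simp add: algebra_simps)
    also have "\<dots> = q * e (Suc k) + \<beta> * (e (Suc k) - q * e k) + (1 - \<beta>) * M * (e (Suc k) - e k)"
      using \<open>M * f k = e (Suc k) - q * e k\<close> by simp
    also have "\<dots> = T * e (Suc k) - D * e k" unfolding T_def D_def r_def by (simp add: algebra_simps)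
    finally show ?thesis .
  qed
  define \<Delta> where "\<Delta> = (r - \<beta>)\<^sup>2 - 4 * (M * (1 - \<beta>)\<^sup>2)"
  define lam where "lam = rcis \<rho> \<theta>"
  have lamE: "lam = (complex_of_real T + csqrt (complex_of_real \<Delta>)) / 2"
    using assms(13) unfolding lam_def T_def r_def q_def \<sigma>2_def F_def \<Delta>_def by simp
  have ImL: "Im lam \<noteq> 0"
    using assms(14,15,16) sin_gt_zero[of \<theta>] unfolding lam_def by simp
  have TD: "T\<^sup>2 - \<Delta> = 4 * D"
    unfolding T_def \<Delta>_def D_def r_def by (simp add: algebra_simps power2_eq_square)
  have sq: "(2 * lam - complex_of_real T)\<^sup>2 = complex_of_real \<Delta>"
  proof -
    have "2 * lam - complex_of_real T = csqrt (complex_of_real \<Delta>)" unfolding lamE by (simp add: field_simps)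
    then show ?thesis by simp
  qed
  have quad: "lam\<^sup>2 = complex_of_real T * lam - complex_of_real D"
  proof -
    have "complex_of_real (T\<^sup>2 - \<Delta>) = complex_of_real (4 * D)" using TD by simp
    then have "(complex_of_real T)\<^sup>2 - complex_of_real \<Delta> = 4 * complex_of_real D" by simp
    with sq have "4 * lam\<^sup>2 = 4 * (complex_of_real T * lam - complex_of_real D)"
      by (simp add: power2_eq_square algebra_simps)
    then show ?thesis by (simp only: mult_cancel_left) simp
  qed
  define u where "u k = e (Suc k)" for k
  have urec: "u (Suc (Suc k)) = T * u (Suc k) - D * u k" for k
    unfolding u_def by (rule rec2)
  define c where "c = Complex (u 0) ((u 0 * Re lam - u 1) / Im lam)"
  have ind: "Re (c * lam ^ k) = u k \<and> Re (c * lam ^ Suc k) = u (Suc k)" for k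
  proof (induction k)
    case 0
    then show ?case using ImL by (simp add: c_def field_simps)
  next
    case (Suc k)
    have "c * lam ^ Suc (Suc k) = c * lam ^ k * lam\<^sup>2" by (simp add: power2_eq_square algebra_simps)
    also have "\<dots> = complex_of_real T * (c * lam ^ Suc k) - complex_of_real D * (c * lam ^ k)"
      unfolding quad by (simp add: algebra_simps)
    finally have "Re (c * lam ^ Suc (Suc k)) = T * Re (c * lam ^ Suc k) - D * Re (c * lam ^ k)" by simp
    with Suc.IH urec[of k] show ?case by simp
  qed
  show ?thesis
  proof (intro exI allI)
    fix k :: nat
    have "rk_expect A (Suc k) (\<lambda>s. (fst (rk_mom A (A *v x) M \<beta> x0 s (Suc k)) - x) \<bullet> v) = u k"
      unfolding u_def e_def X_def ..
    also have "\<dots> = Re (c * lam ^ k)" using ind[of k] by simp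
    also have "c * lam ^ k = rcis (cmod c * \<rho> ^ k) (Arg c + real k * \<theta>)"
      unfolding lam_def DeMoivre2 by (subst (1) rcis_cmod_Arg[symmetric]) (simp only: rcis_mult)
    finally show "rk_expect A (Suc k) (\<lambda>s. (fst (rk_mom A (A *v x) M \<beta> x0 s (Suc k)) - x) \<bullet> v)
             = cmod c * \<rho> ^ k * cos (real k * \<theta> + Arg c)" by (simp add: add.commute)
  qed
qed

end
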